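(* Let $n\ge 1$ and $A$ be as in the context. A position $P$ of $\mathrm{AGG}(n,A)$ is reachable if and only if the sequence $v_1\le v_2\le\dots\le v_n$ of its cell values, sorted in nondecreasing order with each empty cell counted as value $0$ (so $v_i=0$ exactly when $P$ has at least $i$ empty cells), satisfies $v_i\le \mathrm{Single}(i,A)$ for every $i=1,\dots,n$.
   Context: Let $A$ be a set of positive integers with $1\in A$ (the allowed tile values). For an integer $n\ge 0$, the abstract generalized 2048 game $\mathrm{AGG}(n,A)$ is played on $n$ indistinguishable cells. A position assigns to each cell either nothing (the cell is empty) or a tile carrying a value in $A$. The initial position has all cells empty. A step, which can be performed from any position having at least one empty cell, consists of: (i) placing a new tile of value $1$ into a chosen empty cell; then (ii) optionally choosing any collection of pairwise disjoint sets of nonempty cells such that the sum of the tile values in each chosen set belongs to $A$, and merging each chosen set into a single tile, whose value is that sum, placed in one cell of the set, the other cells of the set becoming empty. The game ends when, after a step, all cells are nonempty (no further step is then possible). A position is reachable if it can be obtained from the initial position by a finite sequence of steps. For $n\ge1$, $\mathrm{Single}(n,A)$ denotes the supremum (possibly $\infty$) of the values $x\in A$ such that the position of $\mathrm{AGG}(n,A)$ with one tile of value $x$ and $n-1$ empty cells is reachable. *)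

theory Defs
  imports Main "HOL-Library.Extended_Nat"
begin

text \<open>Positions of AGG(n,A): cells are 0,...,n-1; a position is a function
  p :: nat => nat where p i = 0 means cell i is empty, p i = x > 0 means cell i
  carries a tile of value x; p i = 0 for i >= n.\<close>

definition is_position :: "nat \<Rightarrow> nat set \<Rightarrow> (nat \<Rightarrow> nat) \<Rightarrow> bool" where
  "is_position n A p \<longleftrightarrow> (\<forall>i. n \<le> i \<longrightarrow> p i = 0) \<and> (\<forall>i<n. p i = 0 \<or> p i \<in> A)"

definition merge_result :: "nat \<Rightarrow> nat set \<Rightarrow> (nat \<Rightarrow> nat) \<Rightarrow> (nat \<Rightarrow> nat) \<Rightarrow> bool" where
  "merge_result n A q q' \<longleftrightarrow>
     (\<exists>C t. (\<forall>S\<in>C. S \<subseteq> {i. i < n \<and> q i \<noteq> 0}) \<and>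
            (\<forall>S\<in>C. \<forall>T\<in>C. S \<noteq> T \<longrightarrow> S \<inter> T = {}) \<and>
            (\<forall>S\<in>C. sum q S \<in> A) \<and>
            (\<forall>S\<in>C. t S \<in> S) \<and>
            (\<forall>S\<in>C. q' (t S) = sum q S \<and> (\<forall>j\<in>S - {t S}. q' j = 0)) \<and>
            (\<forall>j. j \<notin> \<Union>C \<longrightarrow> q' j = q j))"

definition game_step :: "nat \<Rightarrow> nat set \<Rightarrow> (nat \<Rightarrow> nat) \<Rightarrow> (nat \<Rightarrow> nat) \<Rightarrow> bool" where
  "game_step n A p p' \<longleftrightarrow>
     (\<exists>c<n. p c = 0 \<and> merge_result n A (p(c := 1)) p')"

definition reachable :: "nat \<Rightarrow> nat set \<Rightarrow> (nat \<Rightarrow> nat) \<Rightarrow> bool" where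
  "reachable n A p \<longleftrightarrow> (game_step n A)\<^sup>*\<^sup>* (\<lambda>_. 0) p"

definition Single :: "nat \<Rightarrow> nat set \<Rightarrow> enat" where
  "Single n A = Sup {enat x | x. x \<in> A \<and> (\<exists>c<n. reachable n A ((\<lambda>_. 0)(c := x)))}"

end

theory Submission
  imports Defs
begin


definition mergeK :: "nat set \<Rightarrow> nat set \<Rightarrow> (nat \<Rightarrow> nat) \<Rightarrow> (nat \<Rightarrow> nat) \<Rightarrow> bool" where
  "mergeK K A q q' \<longleftrightarrow>
     (\<exists>C t. (\<forall>S\<in>C. S \<subseteq> {i. i \<in> K \<and> q i \<noteq> 0}) \<and>
            (\<forall>S\<in>C. \<forall>T\<in>C. S \<noteq> T \<longrightarrow> S \<inter> T = {}) \<and>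
            (\<forall>S\<in>C. sum q S \<in> A) \<and>
            (\<forall>S\<in>C. t S \<in> S) \<and>
            (\<forall>S\<in>C. q' (t S) = sum q S \<and> (\<forall>j\<in>S - {t S}. q' j = 0)) \<and>
            (\<forall>j. j \<notin> \<Union>C \<longrightarrow> q' j = q j))"

definition stepK :: "nat set \<Rightarrow> nat set \<Rightarrow> (nat \<Rightarrow> nat) \<Rightarrow> (nat \<Rightarrow> nat) \<Rightarrow> bool" where
  "stepK K A p p' \<longleftrightarrow> (\<exists>c\<in>K. p c = 0 \<and> mergeK K A (p(c := 1)) p')"

definition reachK :: "nat set \<Rightarrow> nat set \<Rightarrow> (nat \<Rightarrow> nat) \<Rightarrow> bool" where
  "reachK K A p \<longleftrightarrow> (stepK K A)\<^sup>*\<^sup>* (\<lambda>_. 0) p"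

definition RK :: "nat set \<Rightarrow> nat set \<Rightarrow> nat set" where
  "RK K A = {x \<in> A. \<exists>c\<in>K. reachK K A ((\<lambda>_. 0)(c := x))}"

lemma reachable_eq: "reachable n A = reachK {..<n} A"
proof -
  have "merge_result n A = mergeK {..<n} A"
    by (intro ext) (simp add: merge_result_def mergeK_def)
  then have "game_step n A = stepK {..<n} A"
    by (intro ext) (simp add: game_step_def stepK_def lessThan_iff Bex_def)
  then show ?thesis by (intro ext) (simp add: reachable_def reachK_def)
qed

lemma stepK_E:
  assumes "stepK K A p p'"
  obtains c C t where "c \<in> K" "p c = 0"
    "\<forall>S\<in>C. S \<subseteq> {i. i \<in> K \<and> (p(c:=1)) i \<noteq> 0}"
    "\<forall>S\<in>C. \<forall>T\<in>C. S \<noteq> T \<longrightarrow> S \<inter> T = {}"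
    "\<forall>S\<in>C. sum (p(c:=1)) S \<in> A"
    "\<forall>S\<in>C. t S \<in> S"
    "\<forall>S\<in>C. p' (t S) = sum (p(c:=1)) S \<and> (\<forall>j\<in>S - {t S}. p' j = 0)"
    "\<forall>j. j \<notin> \<Union>C \<longrightarrow> p' j = (p(c:=1)) j"
  using assms unfolding stepK_def mergeK_def
  apply (elim exE conjE bexE)
  apply (rule that)
         apply assumption+
  done

lemma stepK_zero_out:
  assumes "stepK K A p p'" "\<forall>j. j \<notin> K \<longrightarrow> p j = 0"
  shows "\<forall>j. j \<notin> K \<longrightarrow> p' j = 0"
proof (intro allI impI)
  fix j assume j: "j \<notin> K"
  from assms(1) obtain c C t where c: "c \<in> K" "p c = 0"
    and C: "\<forall>S\<in>C. S \<subseteq> {i. i \<in> K \<and> (p(c:=1)) i \<noteq> 0}"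
    and "\<forall>S\<in>C. \<forall>T\<in>C. S \<noteq> T \<longrightarrow> S \<inter> T = {}"
    "\<forall>S\<in>C. sum (p(c:=1)) S \<in> A"
    "\<forall>S\<in>C. t S \<in> S"
    "\<forall>S\<in>C. p' (t S) = sum (p(c:=1)) S \<and> (\<forall>j\<in>S - {t S}. p' j = 0)"
    and r: "\<forall>j. j \<notin> \<Union>C \<longrightarrow> p' j = (p(c:=1)) j"
    by (rule stepK_E)
  have "j \<notin> \<Union>C" using C j by blast
  then show "p' j = 0" using r c j assms(2) by auto
qed

lemma reachK_zero_out:
  assumes "reachK K A p" shows "\<forall>j. j \<notin> K \<longrightarrow> p j = 0"
  using assms unfolding reachK_def
proof (induction rule: rtranclp_induct)
  case base then show ?case by simp
next
  case (step y z) then show ?case using stepK_zero_out by blast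
qed

lemma stepK_lift:
  assumes "stepK K A p p'" "\<forall>j\<in>K. b j = 0" "K \<subseteq> K'"
  shows "stepK K' A (\<lambda>j. p j + b j) (\<lambda>j. p' j + b j)"
proof -
  from assms(1) obtain c C t where c: "c \<in> K" "p c = 0"
    and C1: "\<forall>S\<in>C. S \<subseteq> {i. i \<in> K \<and> (p(c:=1)) i \<noteq> 0}"
    and C2: "\<forall>S\<in>C. \<forall>T\<in>C. S \<noteq> T \<longrightarrow> S \<inter> T = {}"
    and C3: "\<forall>S\<in>C. sum (p(c:=1)) S \<in> A"
    and C4: "\<forall>S\<in>C. t S \<in> S"
    and C5: "\<forall>S\<in>C. p' (t S) = sum (p(c:=1)) S \<and> (\<forall>j\<in>S - {t S}. p' j = 0)"
    and C6: "\<forall>j. j \<notin> \<Union>C \<longrightarrow> p' j = (p(c:=1)) j"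
    by (rule stepK_E)
  let ?q = "(\<lambda>j. p j + b j)(c := 1)"
  have qeq: "?q = (\<lambda>j. (p(c:=1)) j + b j)" using assms(2) c by (auto simp: fun_eq_iff)
  have sumeq: "sum ?q S = sum (p(c:=1)) S" if "S \<in> C" for S
  proof -
    have "S \<subseteq> K" using C1 that by blast
    then have "sum ?q S = sum (p(c:=1)) S + sum b S" unfolding qeq by (simp add: sum.distrib)
    also have "sum b S = 0" using \<open>S \<subseteq> K\<close> assms(2) by (auto intro: sum.neutral)
    finally show ?thesis by simp
  qed
  have "mergeK K' A ?q (\<lambda>j. p' j + b j)"
    unfolding mergeK_def
  proof (intro exI[of _ C] exI[of _ t] conjI)
    show "\<forall>S\<in>C. S \<subseteq> {i. i \<in> K' \<and> ?q i \<noteq> 0}" using C1 assms(3) unfolding qeq by fastforce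
    show "\<forall>S\<in>C. \<forall>T\<in>C. S \<noteq> T \<longrightarrow> S \<inter> T = {}" by fact
    show "\<forall>S\<in>C. sum ?q S \<in> A" using C3 sumeq by simp
    show "\<forall>S\<in>C. t S \<in> S" by fact
    show "\<forall>S\<in>C. p' (t S) + b (t S) = sum ?q S \<and> (\<forall>j\<in>S - {t S}. p' j + b j = 0)"
      using C5 sumeq C1 C4 assms(2) by fastforce
    show "\<forall>j. j \<notin> \<Union>C \<longrightarrow> p' j + b j = ?q j" using C6 unfolding qeq by simp
  qed
  moreover have "(\<lambda>j. p j + b j) c = 0" using c assms(2) by simp
  ultimately show ?thesis unfolding stepK_def using c assms(3) by blast
qed

lemma stepsK_lift:
  assumes "(stepK K A)\<^sup>*\<^sup>* p p'" "\<forall>j\<in>K. b j = 0" "K \<subseteq> K'"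
  shows "(stepK K' A)\<^sup>*\<^sup>* (\<lambda>j. p j + b j) (\<lambda>j. p' j + b j)"
  using assms(1)
proof (induction rule: rtranclp_induct)
  case base then show ?case by simp
next
  case (step y z) then show ?case using stepK_lift[OF _ assms(2,3)]
    by (meson rtranclp.rtrancl_into_rtrancl)
qed

lemma RK_mono: assumes "K \<subseteq> K'" shows "RK K A \<subseteq> RK K' A"
proof
  fix x assume "x \<in> RK K A"
  then obtain c where c: "x \<in> A" "c \<in> K" "reachK K A ((\<lambda>_. 0)(c := x))" unfolding RK_def by blast
  have h: "(stepK K' A)\<^sup>*\<^sup>* (\<lambda>j. 0 + 0) (\<lambda>j. ((\<lambda>_. 0)(c := x)) j + 0)"
  proof (rule stepsK_lift[of K A "\<lambda>_. 0" "(\<lambda>_. 0)(c := x)" "\<lambda>_. 0" K'])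
    show "(stepK K A)\<^sup>*\<^sup>* (\<lambda>_. 0) ((\<lambda>_. 0)(c := x))" using c(3) unfolding reachK_def .
  qed (use assms in auto)
  have e1: "(\<lambda>j. ((\<lambda>_. 0)(c := x)) j + (0::nat)) = (\<lambda>_. 0)(c:=x)" by auto
  have e2: "(\<lambda>j. (0::nat) + 0) = (\<lambda>_. 0)" by auto
  from h have "reachK K' A ((\<lambda>_. 0)(c := x))" unfolding reachK_def e1 e2 .
  then show "x \<in> RK K' A" unfolding RK_def using c assms by blast
qed




definition trn :: "(nat \<Rightarrow> nat) \<Rightarrow> nat set \<Rightarrow> nat set \<Rightarrow> (nat \<Rightarrow> nat) \<Rightarrow> (nat \<Rightarrow> nat)" where
  "trn h K K' p = (\<lambda>j. if j \<in> K' then p (inv_into K h j) else 0)"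

lemma trn_h: "bij_betw h K K' \<Longrightarrow> i \<in> K \<Longrightarrow> trn h K K' p (h i) = p i"
  unfolding trn_def by (auto simp: bij_betw_def inv_into_f_f)

lemma trn_out: "j \<notin> K' \<Longrightarrow> trn h K K' p j = 0"
  unfolding trn_def by auto

lemma bij_surj_el: "bij_betw h K K' \<Longrightarrow> j \<in> K' \<Longrightarrow> \<exists>i\<in>K. j = h i"
  by (auto simp: bij_betw_def)

lemma stepK_transport:
  assumes bij: "bij_betw h K K'" and st: "stepK K A p p'"
    and z: "\<forall>j. j \<notin> K \<longrightarrow> p j = 0"
  shows "stepK K' A (trn h K K' p) (trn h K K' p')"
proof -
  from st obtain c C t where c: "c \<in> K" "p c = 0"
    and C1: "\<forall>S\<in>C. S \<subseteq> {i. i \<in> K \<and> (p(c:=1)) i \<noteq> 0}"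
    and C2: "\<forall>S\<in>C. \<forall>T\<in>C. S \<noteq> T \<longrightarrow> S \<inter> T = {}"
    and C3: "\<forall>S\<in>C. sum (p(c:=1)) S \<in> A"
    and C4: "\<forall>S\<in>C. t S \<in> S"
    and C5: "\<forall>S\<in>C. p' (t S) = sum (p(c:=1)) S \<and> (\<forall>j\<in>S - {t S}. p' j = 0)"
    and C6: "\<forall>j. j \<notin> \<Union>C \<longrightarrow> p' j = (p(c:=1)) j"
    by (rule stepK_E)
  have inj: "inj_on h K" using bij by (simp add: bij_betw_def)
  have img: "h ` K = K'" using bij by (simp add: bij_betw_def)
  let ?q = "p(c:=1)"
  let ?tr = "trn h K K'"
  have hc: "h c \<in> K'" using c img by blast
  have qeq: "(?tr p)(h c := 1) = ?tr ?q"
  proof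
    fix j show "((?tr p)(h c := 1)) j = ?tr ?q j"
    proof (cases "j \<in> K'")
      case True
      then obtain i where i: "i \<in> K" "j = h i" using bij_surj_el[OF bij] by blast
      have "i = c \<longleftrightarrow> j = h c" using i c inj by (auto dest: inj_onD)
      then show ?thesis using i trn_h[OF bij] by auto
    next
      case False then show ?thesis using hc by (auto simp: trn_out)
    qed
  qed
  have SK: "S \<subseteq> K" if "S \<in> C" for S using C1 that by blast
  have sumeq: "sum (?tr ?q) (h ` S) = sum ?q S" if "S \<in> C" for S
  proof -
    have "inj_on h S" using inj SK[OF that] by (rule inj_on_subset)
    then have "sum (?tr ?q) (h ` S) = sum (?tr ?q \<circ> h) S" by (rule sum.reindex)
    also have "\<dots> = sum ?q S" using SK[OF that] trn_h[OF bij] by (intro sum.cong) auto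
    finally show ?thesis .
  qed
  have canc: "inv_into K h ` (h ` S) = S" if "S \<in> C" for S
    using inv_into_image_cancel[OF inj SK[OF that]] .
  have "mergeK K' A (?tr ?q) (?tr p')"
    unfolding mergeK_def
  proof (intro exI[of _ "(`) h ` C"] exI[of _ "\<lambda>S'. h (t (inv_into K h ` S'))"] conjI)
    show "\<forall>S\<in>(`) h ` C. S \<subseteq> {i. i \<in> K' \<and> ?tr ?q i \<noteq> 0}"
    proof (intro ballI subsetI)
      fix S' x assume "S' \<in> (`) h ` C" "x \<in> S'"
      then obtain S i where S: "S \<in> C" "i \<in> S" "x = h i" by blast
      then have "i \<in> K" "?q i \<noteq> 0" using C1 by blast+
      then show "x \<in> {i. i \<in> K' \<and> ?tr ?q i \<noteq> 0}" using S img trn_h[OF bij] by auto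
    qed
    show "\<forall>S\<in>(`) h ` C. \<forall>T\<in>(`) h ` C. S \<noteq> T \<longrightarrow> S \<inter> T = {}"
    proof (intro ballI impI)
      fix S' T' assume "S' \<in> (`) h ` C" "T' \<in> (`) h ` C" "S' \<noteq> T'"
      then obtain S T where ST: "S \<in> C" "T \<in> C" "S' = h ` S" "T' = h ` T" "S \<noteq> T" by blast
      then have "S \<inter> T = {}" using C2 by blast
      moreover have "h ` (S \<inter> T) = h ` S \<inter> h ` T"
        by (rule inj_on_image_Int[OF inj SK[OF ST(1)] SK[OF ST(2)]])
      ultimately show "S' \<inter> T' = {}" using ST by simp
    qed
    show "\<forall>S\<in>(`) h ` C. sum (?tr ?q) S \<in> A" using sumeq C3 by auto
    show "\<forall>S\<in>(`) h ` C. h (t (inv_into K h ` S)) \<in> S" using canc C4 by auto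
    show "\<forall>S\<in>(`) h ` C. ?tr p' (h (t (inv_into K h ` S))) = sum (?tr ?q) S \<and>
           (\<forall>j\<in>S - {h (t (inv_into K h ` S))}. ?tr p' j = 0)"
    proof
      fix S' assume "S' \<in> (`) h ` C"
      then obtain S where S: "S \<in> C" "S' = h ` S" by blast
      have tS: "t S \<in> K" using C4 SK S by blast
      show "?tr p' (h (t (inv_into K h ` S'))) = sum (?tr ?q) S' \<and>
           (\<forall>j\<in>S' - {h (t (inv_into K h ` S'))}. ?tr p' j = 0)"
      proof
        have e: "inv_into K h ` S' = S" using canc S by simp
        show "?tr p' (h (t (inv_into K h ` S'))) = sum (?tr ?q) S'"
          unfolding e using S sumeq C5 trn_h[OF bij tS] by simp
        show "\<forall>j\<in>S' - {h (t (inv_into K h ` S'))}. ?tr p' j = 0"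
        proof
          fix j assume "j \<in> S' - {h (t (inv_into K h ` S'))}"
          then obtain i where i: "i \<in> S" "j = h i" "i \<noteq> t S" using S e by auto
          have "i \<in> K" using i SK S by blast
          then show "?tr p' j = 0" using i C5 S trn_h[OF bij] by auto
        qed
      qed
    qed
    show "\<forall>j. j \<notin> \<Union>((`) h ` C) \<longrightarrow> ?tr p' j = ?tr ?q j"
    proof (intro allI impI)
      fix j assume j: "j \<notin> \<Union>((`) h ` C)"
      show "?tr p' j = ?tr ?q j"
      proof (cases "j \<in> K'")
        case True
        then obtain i where i: "i \<in> K" "j = h i" using bij_surj_el[OF bij] by blast
        then have "i \<notin> \<Union>C" using j by blast
        then show ?thesis using C6 i trn_h[OF bij] by auto
      next
        case False then show ?thesis by (simp add: trn_out)
      qed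
    qed
  qed
  moreover have "?tr p (h c) = 0" using trn_h[OF bij c(1)] c by simp
  ultimately show ?thesis unfolding stepK_def using hc qeq by auto
qed

lemma trn_zero: "trn h K K' (\<lambda>_. 0) = (\<lambda>_. 0)"
  unfolding trn_def by auto

lemma reachK_transport:
  assumes bij: "bij_betw h K K'" and r: "reachK K A p"
  shows "reachK K' A (trn h K K' p)"
  using r unfolding reachK_def
proof (induction rule: rtranclp_induct)
  case base then show ?case by (simp add: trn_zero)
next
  case (step y z)
  have "\<forall>j. j \<notin> K \<longrightarrow> y j = 0" using reachK_zero_out step(1) unfolding reachK_def by blast
  then have "stepK K' A (trn h K K' y) (trn h K K' z)"
    using stepK_transport[OF bij step(2)] by blast
  then show ?case using step(3) by (meson rtranclp.rtrancl_into_rtrancl)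
qed

lemma trn_single: "bij_betw h K K' \<Longrightarrow> c \<in> K \<Longrightarrow>
   trn h K K' ((\<lambda>_. 0)(c := x)) = (\<lambda>_. 0)(h c := x)"
proof
  fix j assume bij: "bij_betw h K K'" and c: "c \<in> K"
  show "trn h K K' ((\<lambda>_. 0)(c := x)) j = ((\<lambda>_. 0)(h c := x)) j"
  proof (cases "j \<in> K'")
    case True
    then obtain i where i: "i \<in> K" "j = h i" using bij_surj_el[OF bij] by blast
    have "i = c \<longleftrightarrow> j = h c" using i c bij by (auto simp: bij_betw_def dest: inj_onD)
    then show ?thesis using i trn_h[OF bij] by auto
  next
    case False
    have "h c \<in> K'" using bij c by (auto simp: bij_betw_def)
    then show ?thesis using False by (auto simp: trn_out)
  qed
qed

lemma RK_bij: assumes "bij_betw h K K'" shows "RK K A \<subseteq> RK K' A"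
proof
  fix x assume "x \<in> RK K A"
  then obtain c where c: "x \<in> A" "c \<in> K" "reachK K A ((\<lambda>_. 0)(c := x))" unfolding RK_def by blast
  have "reachK K' A ((\<lambda>_. 0)(h c := x))"
    using reachK_transport[OF assms c(3)] trn_single[OF assms c(2)] by simp
  moreover have "h c \<in> K'" using assms c by (auto simp: bij_betw_def)
  ultimately show "x \<in> RK K' A" unfolding RK_def using c by blast
qed

lemma RK_card_eq: assumes "finite K" shows "RK K A = RK {..<card K} A"
proof -
  obtain h where h: "bij_betw h K {..<card K}"
    using finite_same_card_bij[OF assms, of "{..<card K}"] by auto
  have "bij_betw (inv_into K h) {..<card K} K" using h by (rule bij_betw_inv_into)
  then show ?thesis using RK_bij h by blast
qed

lemma R_mono: "i \<le> j \<Longrightarrow> RK {..<i} A \<subseteq> RK {..<j} A"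
  by (rule RK_mono) auto

lemma RK_card_mono: "finite K \<Longrightarrow> finite K' \<Longrightarrow> card K \<le> card K' \<Longrightarrow> RK K A \<subseteq> RK K' A"
  using RK_card_eq R_mono by metis

lemma single_move:
  assumes "x \<in> RK K A" "c \<in> K"
  shows "reachK K A ((\<lambda>_. 0)(c := x))"
proof -
  obtain c' where c': "c' \<in> K" "reachK K A ((\<lambda>_. 0)(c' := x))" using assms(1) unfolding RK_def by blast
  define sw where "sw = (\<lambda>i. if i = c' then c else if i = c then c' else i)"
  have bij: "bij_betw sw K K"
    by (rule bij_betw_byWitness[of K sw sw K]) (use assms(2) c'(1) in \<open>auto simp: sw_def\<close>)
  show ?thesis using reachK_transport[OF bij c'(2)] trn_single[OF bij c'(1)] by (simp add: sw_def)
qed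




definition merge1 :: "nat set \<Rightarrow> nat set \<Rightarrow> (nat \<Rightarrow> nat) \<Rightarrow> (nat \<Rightarrow> nat) \<Rightarrow> bool" where
  "merge1 K A q q' \<longleftrightarrow> (\<exists>S t. S \<subseteq> {i. i \<in> K \<and> q i \<noteq> 0} \<and> sum q S \<in> A \<and> t \<in> S \<and>
      q' = (\<lambda>j. if j = t then sum q S else if j \<in> S then 0 else q j))"

lemma merge_seq:
  assumes "finite C" "\<forall>S\<in>C. S \<subseteq> {i. i \<in> K \<and> q i \<noteq> 0}"
    "\<forall>S\<in>C. \<forall>T\<in>C. S \<noteq> T \<longrightarrow> S \<inter> T = {}"
    "\<forall>S\<in>C. sum q S \<in> A" "\<forall>S\<in>C. t S \<in> S"
    "\<forall>S\<in>C. q' (t S) = sum q S \<and> (\<forall>j\<in>S - {t S}. q' j = 0)"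
    "\<forall>j. j \<notin> \<Union>C \<longrightarrow> q' j = q j"
  shows "(merge1 K A)\<^sup>*\<^sup>* q q'"
  using assms
proof (induction C arbitrary: q' rule: finite_induct)
  case empty
  then have "q' = q" by auto
  then show ?case by simp
next
  case (insert S0 C0)
  define q'' where "q'' = (\<lambda>j. if j \<in> S0 then q j else q' j)"
  have disj: "S \<inter> S0 = {}" if "S \<in> C0" for S
  proof -
    have "S \<noteq> S0" using that insert.hyps(2) by auto
    then show ?thesis using insert.prems(2)[rule_format, of S S0] that by simp
  qed
  have "(merge1 K A)\<^sup>*\<^sup>* q q''"
  proof (rule insert.IH)
    show "\<forall>S\<in>C0. S \<subseteq> {i. i \<in> K \<and> q i \<noteq> 0}" using insert.prems(1) by simp
    show "\<forall>S\<in>C0. \<forall>T\<in>C0. S \<noteq> T \<longrightarrow> S \<inter> T = {}" using insert.prems(2) by simp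
    show "\<forall>S\<in>C0. sum q S \<in> A" using insert.prems(3) by simp
    show "\<forall>S\<in>C0. t S \<in> S" using insert.prems(4) by simp
    show "\<forall>S\<in>C0. q'' (t S) = sum q S \<and> (\<forall>j\<in>S - {t S}. q'' j = 0)"
    proof
      fix S assume S: "S \<in> C0"
      have "t S \<notin> S0" using disj[OF S] insert.prems(4) S by blast
      moreover have "\<forall>j\<in>S - {t S}. j \<notin> S0" using disj[OF S] by blast
      moreover have "q' (t S) = sum q S \<and> (\<forall>j\<in>S - {t S}. q' j = 0)"
        using insert.prems(5) S by simp
      ultimately show "q'' (t S) = sum q S \<and> (\<forall>j\<in>S - {t S}. q'' j = 0)"
        unfolding q''_def by simp
    qed
    show "\<forall>j. j \<notin> \<Union>C0 \<longrightarrow> q'' j = q j"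
    proof (intro allI impI)
      fix j assume "j \<notin> \<Union>C0"
      then show "q'' j = q j" using insert.prems(6) unfolding q''_def by (cases "j \<in> S0") auto
    qed
  qed
  moreover have "merge1 K A q'' q'"
    unfolding merge1_def
  proof (intro exI[of _ S0] exI[of _ "t S0"] conjI)
    have eq: "sum q'' S0 = sum q S0" unfolding q''_def by (rule sum.cong) auto
    show "S0 \<subseteq> {i. i \<in> K \<and> q'' i \<noteq> 0}" using insert.prems(1) unfolding q''_def by auto
    show "sum q'' S0 \<in> A" using eq insert.prems(3) by simp
    show "t S0 \<in> S0" using insert.prems(4) by simp
    have t0: "q' (t S0) = sum q S0" and z0: "\<forall>j\<in>S0 - {t S0}. q' j = 0"
      using insert.prems(5) by simp_all
    show "q' = (\<lambda>j. if j = t S0 then sum q'' S0 else if j \<in> S0 then 0 else q'' j)"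
    proof
      fix j show "q' j = (if j = t S0 then sum q'' S0 else if j \<in> S0 then 0 else q'' j)"
        unfolding eq using t0 z0 by (simp add: q''_def)
    qed
  qed
  ultimately show ?case by (meson rtranclp.rtrancl_into_rtrancl)
qed

lemma mergeK_merge1s:
  assumes "finite K" "mergeK K A q q'"
  shows "(merge1 K A)\<^sup>*\<^sup>* q q'"
proof -
  obtain C t where C1: "\<forall>S\<in>C. S \<subseteq> {i. i \<in> K \<and> q i \<noteq> 0}"
    and C2: "\<forall>S\<in>C. \<forall>T\<in>C. S \<noteq> T \<longrightarrow> S \<inter> T = {}"
    and C3: "\<forall>S\<in>C. sum q S \<in> A" and C4: "\<forall>S\<in>C. t S \<in> S"
    and C5: "\<forall>S\<in>C. q' (t S) = sum q S \<and> (\<forall>j\<in>S - {t S}. q' j = 0)"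
    and C6: "\<forall>j. j \<notin> \<Union>C \<longrightarrow> q' j = q j"
    using assms(2) unfolding mergeK_def
    apply (elim exE conjE)
    apply (rule that)
         apply assumption+
    done
  have "C \<subseteq> Pow K" using C1 by blast
  then have "finite C" using assms(1) by (meson finite_Pow_iff finite_subset)
  then show ?thesis by (rule merge_seq[OF _ C1 C2 C3 C4 C5 C6])
qed

lemma merge1_sum:
  assumes "finite K" "merge1 K A q q'"
  shows "sum q' K = sum q K"
proof -
  obtain S t where S: "S \<subseteq> {i. i \<in> K \<and> q i \<noteq> 0}" "t \<in> S"
    and q': "q' = (\<lambda>j. if j = t then sum q S else if j \<in> S then 0 else q j)"
    using assms(2) unfolding merge1_def by blast
  have SK: "S \<subseteq> K" using S by blast
  have fS: "finite S" using SK assms(1) by (rule finite_subset)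
  have "sum q' K = sum q' (K - S) + sum q' S" using sum.subset_diff[OF SK assms(1)] .
  also have "sum q' (K - S) = sum q (K - S)" unfolding q' using S(2) by (intro sum.cong) auto
  also have "sum q' S = q' t + sum q' (S - {t})" using sum.remove[OF fS S(2)] .
  also have "sum q' (S - {t}) = 0" unfolding q' by (intro sum.neutral) auto
  also have "q' t = sum q S" unfolding q' by simp
  also have "sum q (K - S) + (sum q S + 0) = sum q K" using sum.subset_diff[OF SK assms(1), of q] by simp
  finally show ?thesis .
qed

lemma merge1s_sum:
  assumes "finite K" "(merge1 K A)\<^sup>*\<^sup>* q q'"
  shows "sum q' K = sum q K"
  using assms(2) by (induction rule: rtranclp_induct) (use merge1_sum[OF assms(1)] in auto)

lemma place_sum:
  assumes "finite K" "c \<in> K" "p c = 0"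
  shows "sum (p(c:=1)) K = Suc (sum p K)"
proof -
  have "sum (p(c:=1)) K = (p(c:=1)) c + sum (p(c:=1)) (K - {c})" using sum.remove[OF assms(1,2)] .
  also have "sum (p(c:=1)) (K - {c}) = sum p (K - {c})" by (intro sum.cong) auto
  also have "sum p K = p c + sum p (K - {c})" using sum.remove[OF assms(1,2)] .
  ultimately show ?thesis using assms(3) by simp
qed

lemma stepK_sum:
  assumes "finite K" "stepK K A p p'"
  shows "sum p' K = Suc (sum p K)"
proof -
  obtain c where c: "c \<in> K" "p c = 0" "mergeK K A (p(c := 1)) p'"
    using assms(2) unfolding stepK_def by blast
  have "sum p' K = sum (p(c:=1)) K" using merge1s_sum[OF assms(1) mergeK_merge1s[OF assms(1) c(3)]] .
  then show ?thesis using place_sum[of K c p, OF assms(1) c(1,2)] by simp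
qed

lemma sum_lemma:
  assumes fin: "finite K" and A0: "0 \<notin> A" and r: "reachK K A p"
  shows "x \<in> A \<Longrightarrow> x \<le> sum p K \<Longrightarrow> x \<in> RK K A"
  using r unfolding reachK_def
proof (induction arbitrary: x rule: rtranclp_induct)
  case base then show ?case using A0 by simp
next
  case (step y z)
  have sz: "sum z K = Suc (sum y K)" using stepK_sum[OF fin step(2)] .
  show ?case
  proof (cases "x \<le> sum y K")
    case True then show ?thesis using step by blast
  next
    case False
    then have x: "x = Suc (sum y K)" using step(5) sz by simp
    obtain c where c: "c \<in> K" "y c = 0" using step(2) unfolding stepK_def by blast
    have yz: "\<forall>j. j \<notin> K \<longrightarrow> y j = 0" using reachK_zero_out step(1) unfolding reachK_def by blast
    let ?q = "y(c:=1)"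
    define S0 where "S0 = {i. i \<in> K \<and> ?q i \<noteq> 0}"
    have cS0: "c \<in> S0" unfolding S0_def using c by simp
    have "sum ?q K = sum ?q S0"
      by (rule sum.mono_neutral_right) (use fin in \<open>auto simp: S0_def\<close>)
    then have sS0: "sum ?q S0 = x" using place_sum[of K c y, OF fin c] x by simp
    have "mergeK K A ?q ((\<lambda>_. 0)(c := x))"
      unfolding mergeK_def
    proof (intro exI[of _ "{S0}"] exI[of _ "\<lambda>_. c"] conjI)
      show "\<forall>S\<in>{S0}. S \<subseteq> {i. i \<in> K \<and> ?q i \<noteq> 0}" unfolding S0_def by simp
      show "\<forall>S\<in>{S0}. \<forall>T\<in>{S0}. S \<noteq> T \<longrightarrow> S \<inter> T = {}" by simp
      show "\<forall>S\<in>{S0}. sum ?q S \<in> A" using sS0 step(4) by simp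
      show "\<forall>S\<in>{S0}. c \<in> S" using cS0 by simp
      show "\<forall>S\<in>{S0}. ((\<lambda>_. 0)(c := x)) c = sum ?q S \<and> (\<forall>j\<in>S - {c}. ((\<lambda>_. 0)(c := x)) j = 0)"
        using sS0 by simp
      show "\<forall>j. j \<notin> \<Union>{S0} \<longrightarrow> ((\<lambda>_. 0)(c := x)) j = ?q j"
      proof (intro allI impI)
        fix j assume "j \<notin> \<Union>{S0}"
        then have j: "j \<notin> S0" by simp
        then have "j \<noteq> c" using cS0 by blast
        moreover have "?q j = 0" using j yz \<open>j \<noteq> c\<close> unfolding S0_def by auto
        ultimately show "((\<lambda>_. 0)(c := x)) j = ?q j" by simp
      qed
    qed
    then have "stepK K A y ((\<lambda>_. 0)(c := x))" unfolding stepK_def using c by blast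
    then have "reachK K A ((\<lambda>_. 0)(c := x))" using step(1) unfolding reachK_def
      by (meson rtranclp.rtrancl_into_rtrancl)
    then show ?thesis unfolding RK_def using c step(4) by blast
  qed
qed

lemma RK_down:
  assumes "finite K" "0 \<notin> A" "y \<in> RK K A" "x \<in> A" "x \<le> y"
  shows "x \<in> RK K A"
proof -
  obtain c where c: "c \<in> K" "reachK K A ((\<lambda>_. 0)(c := y))" using assms(3) unfolding RK_def by blast
  have "sum ((\<lambda>_. 0)(c := y)) K = y" using c(1) assms(1) by (simp add: fun_upd_def)
  then show ?thesis using sum_lemma[OF assms(1,2) c(2) assms(4)] assms(5) by simp
qed

lemma one_RK:
  assumes "1 \<in> A" "c \<in> K"
  shows "1 \<in> RK K A"
proof -
  have "mergeK K A ((\<lambda>_. 0)(c := 1)) ((\<lambda>_. 0)(c := 1))"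
    unfolding mergeK_def by (intro exI[of _ "{}"]) simp
  then have "stepK K A (\<lambda>_. 0) ((\<lambda>_. 0)(c := 1))" unfolding stepK_def using assms(2) by auto
  then have "reachK K A ((\<lambda>_. 0)(c := 1))" unfolding reachK_def by simp
  then show ?thesis unfolding RK_def using assms by blast
qed




definition OK :: "nat set \<Rightarrow> (nat \<Rightarrow> nat) \<Rightarrow> nat \<Rightarrow> nat" where
  "OK K q c = card {d \<in> K. d \<noteq> c \<and> q c \<le> q d}"

definition INVK :: "nat set \<Rightarrow> nat set \<Rightarrow> (nat \<Rightarrow> nat) \<Rightarrow> bool" where
  "INVK K A q \<longleftrightarrow> (\<forall>c\<in>K. q c \<noteq> 0 \<longrightarrow> q c \<in> RK {..<card K - OK K q c} A)"

lemma suff_aux: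
  "\<forall>K q. card K = n \<longrightarrow> finite K \<longrightarrow> (\<forall>j. j \<notin> K \<longrightarrow> q j = 0) \<longrightarrow> INVK K A q \<longrightarrow> reachK K A q"
proof (induction n)
  case 0
  show ?case
  proof (intro allI impI)
    fix K and q :: "nat \<Rightarrow> nat"
    assume "card K = 0" "finite K" "\<forall>j. j \<notin> K \<longrightarrow> q j = 0"
    then have "q = (\<lambda>_. 0)" by auto
    then show "reachK K A q" unfolding reachK_def by simp
  qed
next
  case (Suc n)
  show ?case
  proof (intro allI impI)
    fix K and q :: "nat \<Rightarrow> nat"
    assume cK: "card K = Suc n" and fin: "finite K" and z: "\<forall>j. j \<notin> K \<longrightarrow> q j = 0"
      and inv: "INVK K A q"
    show "reachK K A q"
    proof (cases "\<forall>c\<in>K. q c = 0")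
      case True
      then have "q = (\<lambda>_. 0)" using z by auto
      then show ?thesis unfolding reachK_def by simp
    next
      case False
      then obtain c0 where c0: "c0 \<in> K" "q c0 \<noteq> 0" by blast
      have ne: "q ` K \<noteq> {}" using c0 by blast
      obtain c where c: "c \<in> K" "q c = Max (q ` K)" using Max_in[OF finite_imageI[OF fin] ne] by auto
      have cmax: "\<forall>d\<in>K. q d \<le> q c" using c fin by simp
      have x0: "q c \<noteq> 0" using cmax c0 by (metis le_zero_eq)
      let ?x = "q c"
      have "?x \<in> RK {..<card K - OK K q c} A" using inv c x0 unfolding INVK_def by blast
      also have "\<dots> \<subseteq> RK {..<card K} A" by (rule R_mono) simp
      also have "\<dots> = RK K A" using RK_card_eq[OF fin] by simp
      finally have xR: "?x \<in> RK K A" .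
      have r1: "reachK K A ((\<lambda>_. 0)(c := ?x))" by (rule single_move[OF xR c(1)])
      define K' where "K' = K - {c}"
      define q' where "q' = q(c := 0)"
      have finK': "finite K'" using fin unfolding K'_def by simp
      have cK': "card K' = n" using cK c unfolding K'_def by simp
      have zK': "\<forall>j. j \<notin> K' \<longrightarrow> q' j = 0" using z unfolding K'_def q'_def by auto
      have invK': "INVK K' A q'"
        unfolding INVK_def
      proof (intro ballI impI)
        fix d assume d: "d \<in> K'" "q' d \<noteq> 0"
        have dc: "d \<noteq> c" "d \<in> K" using d unfolding K'_def by auto
        have qd: "q' d = q d" using dc unfolding q'_def by simp
        have seteq: "{e \<in> K. e \<noteq> d \<and> q d \<le> q e} = insert c {e \<in> K'. e \<noteq> d \<and> q' d \<le> q' e}"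
          using dc c cmax unfolding K'_def q'_def by auto
        have "c \<notin> {e \<in> K'. e \<noteq> d \<and> q' d \<le> q' e}" unfolding K'_def by simp
        then have "OK K q d = Suc (OK K' q' d)"
          unfolding OK_def seteq using finK' by simp
        then have "card K - OK K q d = card K' - OK K' q' d" using cK cK' by simp
        moreover have "q d \<in> RK {..<card K - OK K q d} A" using inv dc d(2) qd unfolding INVK_def by auto
        ultimately show "q' d \<in> RK {..<card K' - OK K' q' d} A" using qd by simp
      qed
      have r2: "reachK K' A q'" using Suc.IH cK' finK' zK' invK' by blast
      let ?b = "(\<lambda>_. 0)(c := ?x)"
      have "(stepK K A)\<^sup>*\<^sup>* (\<lambda>j. 0 + ?b j) (\<lambda>j. q' j + ?b j)"
        by (rule stepsK_lift) (use r2 in \<open>auto simp: reachK_def K'_def\<close>)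
      moreover have "(\<lambda>j. 0 + ?b j) = ?b" by (simp add: fun_eq_iff)
      moreover have "(\<lambda>j. q' j + ?b j) = q" unfolding q'_def by auto
      ultimately have "(stepK K A)\<^sup>*\<^sup>* ?b q" by simp
      then show ?thesis using r1 unfolding reachK_def by (meson rtranclp_trans)
    qed
  qed
qed

lemma sufficiency:
  "finite K \<Longrightarrow> (\<forall>j. j \<notin> K \<longrightarrow> q j = 0) \<Longrightarrow> INVK K A q \<Longrightarrow> reachK K A q"
  using suff_aux by blast




definition mv :: "nat set \<Rightarrow> nat set \<Rightarrow> (nat \<Rightarrow> nat) \<Rightarrow> (nat \<Rightarrow> nat) \<Rightarrow> bool" where
  "mv K A p p' \<longleftrightarrow> (\<exists>c\<in>K. p c = 0 \<and> p' = p(c:=1)) \<or> merge1 K A p p'"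

lemma stepK_mvs:
  assumes "finite K" "stepK K A p p'"
  shows "(mv K A)\<^sup>*\<^sup>* p p'"
proof -
  obtain c where c: "c \<in> K" "p c = 0" "mergeK K A (p(c := 1)) p'"
    using assms(2) unfolding stepK_def by blast
  have "mv K A p (p(c:=1))" unfolding mv_def using c by blast
  moreover have "(merge1 K A)\<^sup>*\<^sup>* (p(c:=1)) p'" by (rule mergeK_merge1s[OF assms(1) c(3)])
  then have "(mv K A)\<^sup>*\<^sup>* (p(c:=1)) p'"
    by (rule rtranclp_mono[THEN predicate2D, rotated]) (auto simp: mv_def)
  ultimately show ?thesis by (meson converse_rtranclp_into_rtranclp)
qed

lemma OK_le: "finite K \<Longrightarrow> c \<in> K \<Longrightarrow> OK K q c \<le> card K - 1"
proof -
  assume "finite K" "c \<in> K"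
  have "{d \<in> K. d \<noteq> c \<and> q c \<le> q d} \<subseteq> K - {c}" by blast
  then have "OK K q c \<le> card (K - {c})" unfolding OK_def using \<open>finite K\<close> by (intro card_mono) auto
  then show ?thesis using \<open>c \<in> K\<close> \<open>finite K\<close> by simp
qed

lemma one_R: "1 \<in> A \<Longrightarrow> 1 \<le> m \<Longrightarrow> 1 \<in> RK {..<m} A"
  by (rule one_RK[of A 0]) auto

lemma RK_sub_A: "RK K A \<subseteq> A" unfolding RK_def by blast

lemma R_mono': "b \<le> a \<Longrightarrow> x \<in> RK {..<n - a} A \<Longrightarrow> x \<in> RK {..<n - b} A"
  using R_mono[of "n - a" "n - b" A] diff_le_mono2[of b a n] by blast

lemma place_inv:
  assumes fin: "finite K" and A1: "1 \<in> A" and inv: "INVK K A p" and c: "c \<in> K" "p c = 0"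
  shows "INVK K A (p(c:=1))"
  unfolding INVK_def
proof (intro ballI impI)
  fix d assume d: "d \<in> K" "(p(c:=1)) d \<noteq> 0"
  show "(p(c:=1)) d \<in> RK {..<card K - OK K (p(c:=1)) d} A"
  proof (cases "(p(c:=1)) d = 1")
    case True
    have "OK K (p(c:=1)) d \<le> card K - 1" by (rule OK_le[OF fin d(1)])
    moreover have "card K \<ge> 1" using d(1) fin by (metis One_nat_def Suc_leI card_gt_0_iff empty_iff)
    ultimately have "1 \<le> card K - OK K (p(c:=1)) d" by linarith
    then show ?thesis using True one_R[OF A1] by simp
  next
    case False
    then have dc: "d \<noteq> c" using d by auto
    then have pd: "(p(c:=1)) d = p d" by simp
    have "p d \<ge> 2" using False d(2) pd by linarith
    then have "{e \<in> K. e \<noteq> d \<and> (p(c:=1)) d \<le> (p(c:=1)) e} = {e \<in> K. e \<noteq> d \<and> p d \<le> p e}"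
      using pd c by auto
    then have "OK K (p(c:=1)) d = OK K p d" unfolding OK_def by simp
    then show ?thesis using inv d pd unfolding INVK_def by auto
  qed
qed

lemma merge1_inv:
  assumes fin: "finite K" and A0: "0 \<notin> A" and inv: "INVK K A p" and m: "merge1 K A p p'"
  shows "INVK K A p'"
proof -
  obtain S t where S: "S \<subseteq> {i. i \<in> K \<and> p i \<noteq> 0}" and sA: "sum p S \<in> A" and tS: "t \<in> S"
    and p': "p' = (\<lambda>j. if j = t then sum p S else if j \<in> S then 0 else p j)"
    using m unfolding merge1_def by blast
  define s where "s = sum p S"
  have SK: "S \<subseteq> K" using S by blast
  have fS: "finite S" using SK fin by (rule finite_subset)
  have s0: "s \<noteq> 0"
  proof
    assume "s = 0" then show False using sA A0 unfolding s_def by simp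
  qed
  define amax where "amax = Max (p ` S)"
  have amax_ge: "p e \<le> amax" if "e \<in> S" for e unfolding amax_def using fS that by simp
  have amax_in: "amax \<in> p ` S" unfolding amax_def using fS tS by (intro Max_in) auto
  have le_s: "p e \<le> s" if "e \<in> S" for e unfolding s_def using member_le_sum[OF that _ fS, of p] by simp
  have amax_s: "amax \<le> s" using amax_in le_s by auto
  define E where "E = {d \<in> K - S. amax \<le> p d}"
  have finE: "finite E" unfolding E_def using fin by simp
  have EK: "E \<subseteq> K" unfolding E_def by blast
  define K0 where "K0 = K - E"
  have finK0: "finite K0" unfolding K0_def using fin by simp
  have cK0: "card K0 = card K - card E" unfolding K0_def using EK finE by (simp add: card_Diff_subset)
  have SK0: "S \<subseteq> K0" unfolding K0_def E_def using SK by blast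
  define qS where "qS = (\<lambda>i. if i \<in> S then p i else 0)"
  have invS: "INVK K0 A qS"
    unfolding INVK_def
  proof (intro ballI impI)
    fix c assume c: "c \<in> K0" "qS c \<noteq> 0"
    then have cS: "c \<in> S" unfolding qS_def by (auto split: if_splits)
    have pc0: "p c \<noteq> 0" using S cS by blast
    define Sc where "Sc = {d \<in> S. d \<noteq> c \<and> p c \<le> p d}"
    have eq: "{d \<in> K0. d \<noteq> c \<and> qS c \<le> qS d} = Sc"
      using cS SK0 pc0 unfolding Sc_def qS_def by (auto split: if_splits)
    have sub: "Sc \<union> E \<subseteq> {d \<in> K. d \<noteq> c \<and> p c \<le> p d}"
      using SK cS amax_ge[OF cS] unfolding Sc_def E_def by auto
    have dis: "Sc \<inter> E = {}" unfolding Sc_def E_def by blast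
    have finSc: "finite Sc" unfolding Sc_def using fS by simp
    have "card (Sc \<union> E) = card Sc + card E" by (rule card_Un_disjoint[OF finSc finE dis])
    moreover have "card (Sc \<union> E) \<le> OK K p c" unfolding OK_def
      by (rule card_mono[OF _ sub]) (use fin in simp)
    ultimately have cle: "card Sc + card E \<le> OK K p c" by simp
    have okS: "OK K0 qS c = card Sc" unfolding OK_def eq ..
    have le: "card K - OK K p c \<le> card K0 - OK K0 qS c"
      unfolding okS cK0 using cle by arith
    have "p c \<in> RK {..<card K - OK K p c} A" using inv cS SK pc0 unfolding INVK_def by blast
    then show "qS c \<in> RK {..<card K0 - OK K0 qS c} A"
      using R_mono[OF le] cS unfolding qS_def by auto
  qed
  have zS: "\<forall>j. j \<notin> K0 \<longrightarrow> qS j = 0" using SK0 unfolding qS_def by auto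
  have rS: "reachK K0 A qS" by (rule sufficiency[OF finK0 zS invS])
  have "sum qS K0 = sum p (K0 \<inter> S)" unfolding qS_def using finK0 by (simp add: sum.inter_restrict)
  also have "K0 \<inter> S = S" using SK0 by blast
  finally have sumS: "sum qS K0 = s" unfolding s_def .
  have "s \<in> RK K0 A" using sum_lemma[OF finK0 A0 rS, of s] sA sumS unfolding s_def by simp
  then have claim1: "s \<in> RK {..<card K - card E} A" using RK_card_eq[OF finK0] cK0 by simp
  show ?thesis
    unfolding INVK_def
  proof (intro ballI impI)
    fix d assume d: "d \<in> K" "p' d \<noteq> 0"
    show "p' d \<in> RK {..<card K - OK K p' d} A"
    proof (cases "d = t")
      case True
      have "{e \<in> K. e \<noteq> d \<and> p' d \<le> p' e} \<subseteq> E"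
      proof
        fix e assume e: "e \<in> {e \<in> K. e \<noteq> d \<and> p' d \<le> p' e}"
        have "e \<notin> S"
        proof
          assume "e \<in> S"
          then have "p' e = 0" using e True unfolding p' by auto
          then show False using e True s0 unfolding p' s_def by auto
        qed
        then have "p e \<ge> s" using e True unfolding p' s_def by auto
        then show "e \<in> E" using amax_s e \<open>e \<notin> S\<close> unfolding E_def by auto
      qed
      then have "OK K p' d \<le> card E" unfolding OK_def using finE by (rule card_mono[rotated])
      then show ?thesis using R_mono'[OF _ claim1] True unfolding p' s_def by auto
    next
      case False
      then have dS: "d \<notin> S" using d unfolding p' by auto
      have pd: "p' d = p d" using False dS unfolding p' by simp
      define w where "w = p d"
      define N where "N = {e \<in> K. e \<noteq> d \<and> p' d \<le> p' e}"
      define Ol where "Ol = {e \<in> K. e \<noteq> d \<and> p d \<le> p e}"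
      have finO: "finite Ol" unfolding Ol_def using fin by simp
      have w0: "w \<noteq> 0" using d pd unfolding w_def by simp
      have NO: "N \<subseteq> insert t (Ol - S)"
      proof
        fix e assume e: "e \<in> N"
        show "e \<in> insert t (Ol - S)"
        proof (cases "e = t")
          case True then show ?thesis by simp
        next
          case False
          have "e \<notin> S"
          proof
            assume "e \<in> S" then have "p' e = 0" using False unfolding p' by simp
            then show False using e w0 pd unfolding N_def w_def by auto
          qed
          then show ?thesis using e False pd unfolding N_def Ol_def p' by auto
        qed
      qed
      have oldinv: "w \<in> RK {..<card K - OK K p d} A" using inv d pd unfolding INVK_def w_def by auto
      have wA: "w \<in> A" using oldinv RK_sub_A by blast
      show ?thesis
      proof (cases "s < w \<or> (\<exists>e0\<in>S. w \<le> p e0)")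
        case True
        have "card N \<le> card Ol"
        proof (cases "s < w")
          case True
          have "t \<notin> N" using True pd unfolding N_def p' w_def s_def by auto
          then have "N \<subseteq> Ol - S" using NO by blast
          then show ?thesis using finO by (meson Diff_subset card_mono finite_Diff subset_trans)
        next
          case False
          then obtain e0 where e0: "e0 \<in> S" "w \<le> p e0" using True by blast
          have e0O: "e0 \<in> Ol" using e0 SK dS unfolding Ol_def w_def by auto
          have "card N \<le> card (insert t (Ol - S))" using NO finO by (intro card_mono) auto
          also have "\<dots> \<le> Suc (card (Ol - S))" using finO by (simp add: card_insert_if)
          also have "\<dots> = card (insert e0 (Ol - S))" using e0 finO by simp
          also have "\<dots> \<le> card Ol" using e0O finO by (intro card_mono) auto
          finally show ?thesis .
        qed
        then have "OK K p' d \<le> OK K p d" unfolding OK_def N_def Ol_def .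
        then show ?thesis using R_mono'[OF _ oldinv] pd unfolding w_def by auto
      next
        case False
        then have ws: "w \<le> s" and small: "\<forall>e\<in>S. p e < w" by auto
        have amax_w: "amax < w" using amax_in small by auto
        have dE: "d \<in> E" using d dS amax_w unfolding E_def w_def by auto
        have "Ol - S \<subseteq> E - {d}" using amax_w unfolding Ol_def E_def w_def by auto
        then have "N \<subseteq> insert t (E - {d})" using NO by blast
        then have "card N \<le> card (insert t (E - {d}))" using finE by (intro card_mono) auto
        also have "\<dots> \<le> Suc (card (E - {d}))" using finE by (simp add: card_insert_if)
        also have "\<dots> = card E" using card_Suc_Diff1[OF finE dE] by simp
        finally have "OK K p' d \<le> card E" unfolding OK_def N_def .
        then have sR: "s \<in> RK {..<card K - OK K p' d} A" using R_mono'[OF _ claim1] by blast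
        show ?thesis using RK_down[OF _ A0 sR wA ws] pd unfolding w_def by simp
      qed
    qed
  qed
qed

lemma necessity:
  assumes fin: "finite K" and A0: "0 \<notin> A" and A1: "1 \<in> A" and r: "reachK K A p"
  shows "INVK K A p"
proof -
  have "(mv K A)\<^sup>*\<^sup>* (\<lambda>_. 0) p"
    using r unfolding reachK_def
  proof (induction rule: rtranclp_induct)
    case base then show ?case by simp
  next
    case (step y z) then show ?case using stepK_mvs[OF fin step(2)] by (meson rtranclp_trans)
  qed
  then show ?thesis
  proof (induction rule: rtranclp_induct)
    case base then show ?case unfolding INVK_def by simp
  next
    case (step y z)
    then show ?case unfolding mv_def
      using place_inv[OF fin A1 step(3)] merge1_inv[OF fin A0 step(3)] by auto
  qed
qed




lemma Single_eq: "Single i A = Sup (enat ` RK {..<i} A)"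
proof -
  have "{enat x | x. x \<in> A \<and> (\<exists>c<i. reachable i A ((\<lambda>_. 0)(c := x)))} = enat ` RK {..<i} A"
    unfolding RK_def reachable_eq by auto
  then show ?thesis unfolding Single_def by simp
qed

lemma le_Single_iff:
  assumes A0: "0 \<notin> A" and xA: "x \<in> A"
  shows "enat x \<le> Single i A \<longleftrightarrow> x \<in> RK {..<i} A"
proof
  assume "x \<in> RK {..<i} A"
  then show "enat x \<le> Single i A" unfolding Single_eq by (simp add: Sup_upper)
next
  assume le: "enat x \<le> Single i A"
  show "x \<in> RK {..<i} A"
  proof (rule ccontr)
    assume nx: "x \<notin> RK {..<i} A"
    have "\<forall>y\<in>RK {..<i} A. y < x"
    proof
      fix y assume y: "y \<in> RK {..<i} A"
      show "y < x"
      proof (rule ccontr)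
        assume "\<not> y < x"
        then have "x \<le> y" by simp
        then have "x \<in> RK {..<i} A" using RK_down[OF _ A0 y xA] by simp
        then show False using nx by simp
      qed
    qed
    then have "Sup (enat ` RK {..<i} A) \<le> enat (x - 1)"
      by (intro Sup_least) auto
    moreover have "x \<noteq> 0"
    proof
      assume "x = 0" then show False using A0 xA by simp
    qed
    ultimately have "Single i A < enat x" unfolding Single_eq by (simp add: order_le_less_trans)
    then show False using le by simp
  qed
qed

lemma count_sort:
  "length (filter Q (sort (map P [0..<n]))) = card {d. d < n \<and> Q (P d)}"
proof -
  have "length (filter Q (sort (map P [0..<n]))) = length (filter Q (map P [0..<n]))"
    by (simp add: filter_sort)
  also have "\<dots> = card {i. i < n \<and> Q (map P [0..<n] ! i)}" by (simp add: length_filter_conv_card)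
  also have "\<dots> = card {d. d < n \<and> Q (P d)}" by (rule arg_cong[where f=card]) auto
  finally show ?thesis .
qed

lemma F1:
  fixes s :: "nat list"
  assumes "sorted s" "k < length s" "s ! k < x"
  shows "length (filter (\<lambda>z. x \<le> z) s) \<le> length s - 1 - k"
proof -
  have "{i. i < length s \<and> x \<le> s ! i} \<subseteq> {Suc k..<length s}"
  proof
    fix i assume i: "i \<in> {i. i < length s \<and> x \<le> s ! i}"
    have "\<not> i \<le> k"
    proof
      assume "i \<le> k"
      then have "s ! i \<le> s ! k" using sorted_nth_mono[OF assms(1) _ assms(2)] by blast
      then show False using i assms(3) by simp
    qed
    then show "i \<in> {Suc k..<length s}" using i by auto
  qed
  then have "card {i. i < length s \<and> x \<le> s ! i} \<le> card {Suc k..<length s}" by (intro card_mono) auto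
  then show ?thesis by (simp add: length_filter_conv_card)
qed

lemma F2:
  fixes s :: "nat list"
  assumes "sorted s" "k < length s"
  shows "length (filter (\<lambda>z. s ! k \<le> z) s) \<ge> length s - k"
proof -
  have "{k..<length s} \<subseteq> {i. i < length s \<and> s ! k \<le> s ! i}"
    using sorted_nth_mono[OF assms(1)] by auto
  then have "card {k..<length s} \<le> card {i. i < length s \<and> s ! k \<le> s ! i}" by (intro card_mono) auto
  then show ?thesis by (simp add: length_filter_conv_card)
qed

lemma count_OK:
  assumes "c < n"
  shows "card {d. d < n \<and> P c \<le> P d} = Suc (OK {..<n} P c)"
proof -
  have "{d. d < n \<and> P c \<le> P d} = insert c {d \<in> {..<n}. d \<noteq> c \<and> P c \<le> P d}" using assms by auto
  then show ?thesis unfolding OK_def by simp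
qed

theorem mainTheorem6:
  fixes n :: nat and A :: "nat set" and P :: "nat \<Rightarrow> nat"
  assumes "n \<ge> 1" and "0 \<notin> A" and "1 \<in> A"
    and "is_position n A P"
  shows "reachable n A P \<longleftrightarrow>
           (\<forall>i\<in>{1..n}. enat (sort (map P [0..<n]) ! (i - 1)) \<le> Single i A)"
proof -
  note A0 = assms(2) and A1 = assms(3)
  have zP: "\<forall>j. j \<notin> {..<n} \<longrightarrow> P j = 0" and vP: "\<forall>i<n. P i = 0 \<or> P i \<in> A"
    using assms(4) unfolding is_position_def by auto
  define s where "s = sort (map P [0..<n])"
  have ls: "length s = n" unfolding s_def by simp
  have ss: "sorted s" unfolding s_def by simp
  have sets: "set s = P ` {..<n}" unfolding s_def by auto
  have cnt: "length (filter Q s) = card {d. d < n \<and> Q (P d)}" for Q unfolding s_def by (rule count_sort)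
  have "reachable n A P \<longleftrightarrow> INVK {..<n} A P"
    unfolding reachable_eq
  proof
    assume "reachK {..<n} A P" then show "INVK {..<n} A P" by (rule necessity[OF finite_lessThan A0 A1])
  next
    assume "INVK {..<n} A P" then show "reachK {..<n} A P" by (rule sufficiency[OF finite_lessThan zP])
  qed
  also have "\<dots> \<longleftrightarrow> (\<forall>i\<in>{1..n}. enat (s ! (i - 1)) \<le> Single i A)"
  proof
    assume inv: "INVK {..<n} A P"
    show "\<forall>i\<in>{1..n}. enat (s ! (i - 1)) \<le> Single i A"
    proof
      fix i assume i: "i \<in> {1..n}"
      define k where "k = i - 1"
      have k: "k < n" "i = Suc k" using i unfolding k_def by auto
      show "enat (s ! (i - 1)) \<le> Single i A"
      proof (cases "s ! k = 0")
        case True then show ?thesis unfolding k_def using zero_le[of "Single i A"] by (simp add: zero_enat_def)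
      next
        case False
        have "s ! k \<in> set s" using k ls by simp
        then obtain c where c: "c < n" "s ! k = P c" using sets by auto
        have yA: "s ! k \<in> A" using vP c False by auto
        have Pc: "P c \<in> RK {..<n - OK {..<n} P c} A" using inv c False unfolding INVK_def by auto
        have "length (filter (\<lambda>z. s ! k \<le> z) s) \<ge> n - k" using F2[OF ss, of k] k ls by simp
        moreover have "length (filter (\<lambda>z. s ! k \<le> z) s) = card {d. d < n \<and> P c \<le> P d}"
          using cnt[of "\<lambda>z. s ! k \<le> z"] c(2) by simp
        ultimately have "Suc (OK {..<n} P c) \<ge> n - k" using count_OK[OF c(1)] by simp
        then have "n - OK {..<n} P c \<le> i" using k by simp
        then have "s ! k \<in> RK {..<i} A" using Pc R_mono[of "n - OK {..<n} P c" i A] c by auto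
        then show ?thesis using le_Single_iff[OF A0 yA] unfolding k_def by simp
      qed
    qed
  next
    assume cond: "\<forall>i\<in>{1..n}. enat (s ! (i - 1)) \<le> Single i A"
    show "INVK {..<n} A P"
      unfolding INVK_def
    proof (intro ballI impI)
      fix c assume c: "c \<in> {..<n}" "P c \<noteq> 0"
      have cn: "c < n" using c by simp
      have xA: "P c \<in> A" using vP c by auto
      have okle: "OK {..<n} P c \<le> n - 1" using OK_le[of "{..<n}" c P] c by simp
      define k where "k = n - 1 - OK {..<n} P c"
      have k: "k < n" unfolding k_def using cn by simp
      have ge: "P c \<le> s ! k"
      proof (rule ccontr)
        assume "\<not> P c \<le> s ! k"
        then have "s ! k < P c" by simp
        then have "length (filter (\<lambda>z. P c \<le> z) s) \<le> n - 1 - k" using F1[OF ss _ ] k ls by simp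
        moreover have "length (filter (\<lambda>z. P c \<le> z) s) = card {d. d < n \<and> P c \<le> P d}"
          by (rule cnt)
        ultimately have "Suc (OK {..<n} P c) \<le> n - 1 - k" using count_OK[OF cn] by simp
        then show False using okle unfolding k_def by simp
      qed
      have sk0: "s ! k \<noteq> 0" using ge c(2) by simp
      have "s ! k \<in> set s" using k ls by simp
      then have skA: "s ! k \<in> A" using sets vP sk0 by auto
      have "enat (s ! k) \<le> Single (Suc k) A" using cond[rule_format, of "Suc k"] k by simp
      then have "s ! k \<in> RK {..<Suc k} A" using le_Single_iff[OF A0 skA] by simp
      then have "P c \<in> RK {..<Suc k} A" using RK_down[OF _ A0 _ xA ge] by simp
      moreover have "Suc k = card {..<n} - OK {..<n} P c" unfolding k_def using okle cn by simp
      ultimately show "P c \<in> RK {..<card {..<n} - OK {..<n} P c} A" by simp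
    qed
  qed
  finally show ?thesis unfolding s_def .
qed


end
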